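(* Let $n \geq 1$, let $S^{n-1}$ be the topological $(n-1)$-sphere with a base point $\ast$, regarded as a pseudotopological space, and let $[0,1]$ be the topological interval. Let $\Sigma S^{n-1}$ be the pseudotopological based suspension, i.e. the quotient of $S^{n-1}\times[0,1]$ in $\mathbf{PsTop}$ by the relation $(x,k) \sim (x',k) \sim (\ast, t)$ for all $x,x' \in S^{n-1}$, $k \in \{0,1\}$, $t\in[0,1]$. Then the quotient pseudotopology on $\Sigma S^{n-1}$ coincides with the pseudotopology induced by the quotient topology, and $\Sigma S^{n-1} \cong (S^n, \tau)$, where $(S^n,\tau)$ is the topological $n$-sphere regarded as a pseudotopological space.
   Context: A convergence space is a set $X$ with a relation between filters on $X$ and points (written $\lambda\to x$) such that $\lambda\to x$ and $\lambda\subseteq\lambda'$ imply $\lambda'\to x$, and the principal ultrafilter $\dot x\to x$. It is pseudotopological iff $\lambda\to x$ holds exactly when every ultrafilter containing $\lambda$ converges to $x$. Continuous maps: $\lambda\to x$ implies $f(\lambda)\to f(x)$, where $f(\lambda)$ is generated by images. $\mathbf{PsTop}$ is the category of pseudotopological spaces and continuous maps. A topological space is regarded as a pseudotopological space by $\lambda\to x$ iff $\lambda$ contains the neighbourhood filter of $x$. Products carry the initial structure with respect to projections; the quotient by a surjection $q$ in $\mathbf{PsTop}$ carries the final pseudotopology, i.e. the finest pseudotopology making $q$ continuous. *)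

theory Defs
  imports "HOL-Analysis.Analysis"
begin

text \<open>Convergence spaces are modelled on a carrier set X (of some type 'a) together with a
relation c :: 'a filter => 'a => bool, "c F x" meaning "F converges to x".  Note: in HOL, G \<le> F means G is finer,
i.e. F \<subseteq> G as families of sets.\<close>

definition filter_on :: "'a set \<Rightarrow> 'a filter \<Rightarrow> bool" where
  "filter_on X F \<longleftrightarrow> F \<noteq> bot \<and> eventually (\<lambda>x. x \<in> X) F"

definition ultrafilter_on :: "'a set \<Rightarrow> 'a filter \<Rightarrow> bool" where
  "ultrafilter_on X U \<longleftrightarrow> filter_on X U \<and> (\<forall>G. filter_on X G \<and> G \<le> U \<longrightarrow> G = U)"

definition conv_space :: "'a set \<Rightarrow> ('a filter \<Rightarrow> 'a \<Rightarrow> bool) \<Rightarrow> bool" where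
  "conv_space X c \<longleftrightarrow>
     (\<forall>F x. c F x \<longrightarrow> x \<in> X \<and> filter_on X F) \<and>
     (\<forall>F G x. c F x \<and> filter_on X G \<and> G \<le> F \<longrightarrow> c G x) \<and>
     (\<forall>x\<in>X. c (principal {x}) x)"

definition pstop :: "'a set \<Rightarrow> ('a filter \<Rightarrow> 'a \<Rightarrow> bool) \<Rightarrow> bool" where
  "pstop X c \<longleftrightarrow> conv_space X c \<and>
     (\<forall>F x. filter_on X F \<and> x \<in> X \<longrightarrow>
        (c F x \<longleftrightarrow> (\<forall>U. ultrafilter_on X U \<and> U \<le> F \<longrightarrow> c U x)))"

definition conv_continuous ::
  "'a set \<Rightarrow> ('a filter \<Rightarrow> 'a \<Rightarrow> bool) \<Rightarrow> 'b set \<Rightarrow> ('b filter \<Rightarrow> 'b \<Rightarrow> bool) \<Rightarrow> ('a \<Rightarrow> 'b) \<Rightarrow> bool" where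
  "conv_continuous X c Y d f \<longleftrightarrow> f ` X \<subseteq> Y \<and> (\<forall>F x. c F x \<longrightarrow> d (filtermap f F) (f x))"

definition conv_of_top :: "'a topology \<Rightarrow> 'a filter \<Rightarrow> 'a \<Rightarrow> bool" where
  "conv_of_top T F x \<longleftrightarrow> x \<in> topspace T \<and> filter_on (topspace T) F \<and> F \<le> nhdsin T x"

definition prod_conv ::
  "'a set \<Rightarrow> ('a filter \<Rightarrow> 'a \<Rightarrow> bool) \<Rightarrow> 'b set \<Rightarrow> ('b filter \<Rightarrow> 'b \<Rightarrow> bool)
    \<Rightarrow> ('a \<times> 'b) filter \<Rightarrow> 'a \<times> 'b \<Rightarrow> bool" where
  "prod_conv X c Y d F p \<longleftrightarrow> p \<in> X \<times> Y \<and> filter_on (X \<times> Y) F \<and>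
     c (filtermap fst F) (fst p) \<and> d (filtermap snd F) (snd p)"

text \<open>Quotient in PsTop by a surjection q : X -> Y: the finest pseudotopology on Y making q
continuous, obtained as the intersection of all pseudotopologies on Y making q continuous.\<close>
definition quotient_conv ::
  "'a set \<Rightarrow> ('a filter \<Rightarrow> 'a \<Rightarrow> bool) \<Rightarrow> ('a \<Rightarrow> 'b) \<Rightarrow> 'b set \<Rightarrow> 'b filter \<Rightarrow> 'b \<Rightarrow> bool" where
  "quotient_conv X c q Y G y \<longleftrightarrow> filter_on Y G \<and> y \<in> Y \<and>
     (\<forall>d. pstop Y d \<and> conv_continuous X c Y d q \<longrightarrow> d G y)"

definition quotient_top :: "'a topology \<Rightarrow> ('a \<Rightarrow> 'b) \<Rightarrow> 'b set \<Rightarrow> 'b topology" where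
  "quotient_top T q Y = topology (\<lambda>U. U \<subseteq> Y \<and> openin T {x \<in> topspace T. q x \<in> U})"

definition conv_homeomorphic ::
  "'a set \<Rightarrow> ('a filter \<Rightarrow> 'a \<Rightarrow> bool) \<Rightarrow> 'b set \<Rightarrow> ('b filter \<Rightarrow> 'b \<Rightarrow> bool) \<Rightarrow> bool" where
  "conv_homeomorphic X c Y d \<longleftrightarrow> (\<exists>f g. conv_continuous X c Y d f \<and> conv_continuous Y d X c g \<and>
      (\<forall>x\<in>X. g (f x) = x) \<and> (\<forall>y\<in>Y. f (g y) = y))"

text \<open>The equivalence relation generated by (x,k) ~ (x',k) ~ (b,t), k in {0,1}:
all points of S \<times> {0,1} \<union> {b} \<times> [0,1] are identified, nothing else.\<close>
definition susp_collapsed :: "'a set \<Rightarrow> 'a \<Rightarrow> ('a \<times> real) set" where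
  "susp_collapsed S b = (S \<times> {0, 1}) \<union> ({b} \<times> {0..1})"

definition susp_rel :: "'a set \<Rightarrow> 'a \<Rightarrow> (('a \<times> real) \<times> ('a \<times> real)) set" where
  "susp_rel S b = {(p, p'). p \<in> S \<times> {0..1} \<and> p' \<in> S \<times> {0..1} \<and>
      (p = p' \<or> (p \<in> susp_collapsed S b \<and> p' \<in> susp_collapsed S b))}"

definition susp_quot :: "'a set \<Rightarrow> 'a \<Rightarrow> 'a \<times> real \<Rightarrow> ('a \<times> real) set" where
  "susp_quot S b p = susp_rel S b `` {p}"

definition susp_space :: "'a set \<Rightarrow> 'a \<Rightarrow> ('a \<times> real) set set" where
  "susp_space S b = (S \<times> {0..1}) // susp_rel S b"

end

theory Submission
  imports Defs
begin


lemma ultrafilter_exists: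
  assumes F: "filter_on Y F"
  shows "\<exists>U. ultrafilter_on Y U \<and> U \<le> F"
proof -
  define A where "A = {G. filter_on Y G \<and> G \<le> F}"
  have po: "partial_order_on A (relation_of (\<lambda>a b. b \<le> a) A)"
    by (rule partial_order_on_relation_ofI) auto
  have "\<exists>m \<in> A. \<forall>a \<in> A. a \<le> m \<longrightarrow> a = m"
  proof (rule predicate_Zorn[OF po])
    fix C assume C: "C \<in> Chains (relation_of (\<lambda>a b. b \<le> a) A)"
    hence CA: "C \<subseteq> A" and tot: "\<And>a b. a \<in> C \<Longrightarrow> b \<in> C \<Longrightarrow> a \<le> b \<or> b \<le> a"
      unfolding Chains_def relation_of_def by auto
    show "\<exists>u\<in>A. \<forall>a\<in>C. u \<le> a"
    proof (cases "C = {}")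
      case True then show ?thesis using F unfolding A_def by auto
    next
      case False
      have ev: "eventually P (Inf C) \<longleftrightarrow> (\<exists>b\<in>C. eventually P b)" for P
      proof (rule eventually_Inf_base[OF False])
        fix a b assume "a \<in> C" "b \<in> C"
        then show "\<exists>x\<in>C. x \<le> inf a b"
        proof (cases "a \<le> b")
          case True then show ?thesis using \<open>a \<in> C\<close> by (intro bexI[of _ a]) simp_all
        next
          case False then have "b \<le> a" using tot[OF \<open>a \<in> C\<close> \<open>b \<in> C\<close>] by simp
          then show ?thesis using \<open>b \<in> C\<close> by (intro bexI[of _ b]) simp_all
        qed
      qed
      have "Inf C \<noteq> bot"
      proof
        assume "Inf C = bot"
        then have "eventually (\<lambda>_. False) (Inf C)" by simp
        then obtain c where "c \<in> C" "eventually (\<lambda>_. False) c" using ev[of "\<lambda>_. False"] by blast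
        then have "c = bot" by (simp add: trivial_limit_def)
        moreover have "c \<noteq> bot" using \<open>c \<in> C\<close> CA unfolding A_def filter_on_def by auto
        ultimately show False by simp
      qed
      moreover have "eventually (\<lambda>x. x \<in> Y) (Inf C)"
      proof -
        obtain c where "c \<in> C" using False by auto
        then have "eventually (\<lambda>x. x \<in> Y) c" using CA unfolding A_def filter_on_def by auto
        then show ?thesis using ev[of "\<lambda>x. x \<in> Y"] \<open>c \<in> C\<close> by blast
      qed
      moreover have "Inf C \<le> F" using False CA unfolding A_def
      proof -
        obtain c where "c \<in> C" using False by auto
        then have "Inf C \<le> c" "c \<le> F" using CA unfolding A_def by (auto intro: Inf_lower)
        then show ?thesis by (rule order_trans)
      qed
      ultimately show ?thesis unfolding A_def filter_on_def
        by (auto intro: Inf_lower)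
    qed
  qed
  then obtain m where m: "m \<in> A" "\<And>a. a \<in> A \<Longrightarrow> a \<le> m \<Longrightarrow> a = m" by blast
  have "ultrafilter_on Y m"
    unfolding ultrafilter_on_def
  proof (intro conjI allI impI)
    show "filter_on Y m" using m unfolding A_def by auto
    fix G assume "filter_on Y G \<and> G \<le> m"
    then show "G = m" using m unfolding A_def by auto
  qed
  then show ?thesis using m unfolding A_def by auto
qed

lemma ev2:
  assumes "eventually P F" "eventually Q F" "\<And>x. P x \<Longrightarrow> Q x \<Longrightarrow> R x"
  shows "eventually R F"
proof -
  have "eventually (\<lambda>x. P x \<and> Q x) F" using assms(1,2) by (rule eventually_conj)
  then show ?thesis by (rule eventually_mono) (use assms(3) in blast)
qed

lemma ultra_cases:
  assumes U: "ultrafilter_on Y U"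
  shows "eventually (\<lambda>y. y \<in> A) U \<or> eventually (\<lambda>y. y \<in> Y \<and> y \<notin> A) U"
proof (rule ccontr)
  assume n: "\<not> ?thesis"
  define G where "G = inf U (principal (Y - A))"
  have UY: "eventually (\<lambda>x. x \<in> Y) U" using U unfolding ultrafilter_on_def filter_on_def by auto
  have "G \<noteq> bot"
  proof
    assume "G = bot"
    then have "eventually (\<lambda>_. False) G" by simp
    then have "eventually (\<lambda>y. y \<in> Y - A \<longrightarrow> False) U"
      unfolding G_def eventually_inf_principal .
    from UY this have "eventually (\<lambda>y. y \<in> A) U" by (rule ev2) blast
    then show False using n by auto
  qed
  moreover have "eventually (\<lambda>x. x \<in> Y) G" unfolding G_def
    by (simp add: eventually_inf_principal)
  ultimately have "filter_on Y G" unfolding filter_on_def by auto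
  moreover have "G \<le> U" unfolding G_def by simp
  ultimately have "G = U" using U unfolding ultrafilter_on_def by auto
  have "eventually (\<lambda>y. y \<in> Y - A) G" unfolding G_def eventually_inf_principal
    by (rule always_eventually) blast
  then have "eventually (\<lambda>y. y \<in> Y - A) U" using \<open>G = U\<close> by simp
  hence "eventually (\<lambda>y. y \<in> Y \<and> y \<notin> A) U" by simp
  then show False using n by auto
qed




lemma le_nhdsin_iff:
  assumes "x \<in> topspace T"
  shows "F \<le> nhdsin T x \<longleftrightarrow> (\<forall>U. openin T U \<and> x \<in> U \<longrightarrow> eventually (\<lambda>y. y \<in> U) F)"
proof
  assume "F \<le> nhdsin T x"
  then have le: "\<And>P. eventually P (nhdsin T x) \<Longrightarrow> eventually P F" by (simp add: le_filter_def)
  show "\<forall>U. openin T U \<and> x \<in> U \<longrightarrow> eventually (\<lambda>y. y \<in> U) F"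
  proof (intro allI impI)
    fix U assume "openin T U \<and> x \<in> U"
    then have "eventually (\<lambda>y. y \<in> U) (nhdsin T x)" unfolding eventually_nhdsin by blast
    then show "eventually (\<lambda>y. y \<in> U) F" by (rule le)
  qed
next
  assume R: "\<forall>U. openin T U \<and> x \<in> U \<longrightarrow> eventually (\<lambda>y. y \<in> U) F"
  show "F \<le> nhdsin T x"
    unfolding le_filter_def eventually_nhdsin
  proof (intro allI impI)
    fix P assume "x \<notin> topspace T \<or> (\<exists>S. openin T S \<and> x \<in> S \<and> (\<forall>x\<in>S. P x))"
    then obtain S where "openin T S" "x \<in> S" "\<forall>x\<in>S. P x" using assms by auto
    then have "eventually (\<lambda>y. y \<in> S) F" using R by auto
    then show "eventually P F" by (rule eventually_mono) (use \<open>\<forall>x\<in>S. P x\<close> in blast)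
  qed
qed

lemma pstop_conv_of_top: "pstop (topspace T) (conv_of_top T)"
  unfolding pstop_def conv_space_def
proof (intro conjI allI impI ballI)
  fix F x assume "conv_of_top T F x"
  then show "x \<in> topspace T" "filter_on (topspace T) F" unfolding conv_of_top_def by auto
next
  fix F G x assume "conv_of_top T F x \<and> filter_on (topspace T) G \<and> G \<le> F"
  then show "conv_of_top T G x" unfolding conv_of_top_def by auto
next
  fix x assume x: "x \<in> topspace T"
  have "filter_on (topspace T) (principal {x})" unfolding filter_on_def using x
    by (auto simp: eventually_principal principal_eq_bot_iff)
  moreover have "principal {x} \<le> nhdsin T x" using x
    by (auto simp: le_nhdsin_iff eventually_principal)
  ultimately show "conv_of_top T (principal {x}) x" unfolding conv_of_top_def using x by auto
next
  fix F x assume Fx: "filter_on (topspace T) F \<and> x \<in> topspace T"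
  show "conv_of_top T F x = (\<forall>U. ultrafilter_on (topspace T) U \<and> U \<le> F \<longrightarrow> conv_of_top T U x)"
  proof
    assume "conv_of_top T F x"
    then show "\<forall>U. ultrafilter_on (topspace T) U \<and> U \<le> F \<longrightarrow> conv_of_top T U x"
      unfolding conv_of_top_def ultrafilter_on_def by auto
  next
    assume R: "\<forall>U. ultrafilter_on (topspace T) U \<and> U \<le> F \<longrightarrow> conv_of_top T U x"
    have "F \<le> nhdsin T x"
      unfolding le_nhdsin_iff[OF conjunct2[OF Fx]]
    proof (intro allI impI)
      fix V assume V: "openin T V \<and> x \<in> V"
      show "eventually (\<lambda>y. y \<in> V) F"
      proof (rule ccontr)
        assume nO: "\<not> eventually (\<lambda>y. y \<in> V) F"
        define G where "G = inf F (principal (topspace T - V))"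
        have FY: "eventually (\<lambda>y. y \<in> topspace T) F" using Fx unfolding filter_on_def by auto
        have "G \<noteq> bot"
        proof
          assume "G = bot"
          then have "eventually (\<lambda>_. False) G" by simp
          then have "eventually (\<lambda>y. y \<in> topspace T - V \<longrightarrow> False) F"
            unfolding G_def eventually_inf_principal .
          from FY this have "eventually (\<lambda>y. y \<in> V) F" by (rule ev2) blast
          then show False using nO by auto
        qed
        moreover have "eventually (\<lambda>y. y \<in> topspace T) G" unfolding G_def
          by (simp add: eventually_inf_principal)
        ultimately have "filter_on (topspace T) G" unfolding filter_on_def by auto
        then obtain U where U: "ultrafilter_on (topspace T) U" "U \<le> G"
          using ultrafilter_exists by blast
        have "U \<le> F" using U(2) unfolding G_def by simp
        then have "conv_of_top T U x" using R U by auto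
        then have e1: "eventually (\<lambda>y. y \<in> V) U" using V Fx unfolding conv_of_top_def
          by (auto simp: le_nhdsin_iff)
        have "eventually (\<lambda>y. y \<notin> V) G" unfolding G_def eventually_inf_principal
          by (rule always_eventually) blast
        then have e2: "eventually (\<lambda>y. y \<notin> V) U" using U(2) by (simp add: le_filter_def)
        have "eventually (\<lambda>y. False) U" using e1 e2 by (rule ev2) blast
        then show False using U(1) unfolding ultrafilter_on_def filter_on_def
          by (simp add: trivial_limit_def)
      qed
    qed
    then show "conv_of_top T F x" unfolding conv_of_top_def using Fx by auto
  qed
qed

lemma conv_cont_of_top:
  assumes img: "f ` topspace T \<subseteq> topspace T'"
    and op: "\<And>W. openin T' W \<Longrightarrow> openin T {x \<in> topspace T. f x \<in> W}"
  shows "conv_continuous (topspace T) (conv_of_top T) (topspace T') (conv_of_top T') f"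
  unfolding conv_continuous_def
proof (intro conjI allI impI img)
  fix F x assume c: "conv_of_top T F x"
  then have x: "x \<in> topspace T" and F: "F \<noteq> bot" "eventually (\<lambda>y. y \<in> topspace T) F"
    and le: "F \<le> nhdsin T x"
    unfolding conv_of_top_def filter_on_def by auto
  have "filter_on (topspace T') (filtermap f F)"
    unfolding filter_on_def
  proof
    show "filtermap f F \<noteq> bot" using F(1) by (simp add: filtermap_bot_iff)
    show "eventually (\<lambda>y. y \<in> topspace T') (filtermap f F)" unfolding eventually_filtermap
      by (rule eventually_mono[OF F(2)]) (use img in blast)
  qed
  moreover have "filtermap f F \<le> nhdsin T' (f x)"
    unfolding le_nhdsin_iff[OF imageI[OF x, THEN subsetD[OF img]]] eventually_filtermap
  proof (intro allI impI)
    fix W assume W: "openin T' W \<and> f x \<in> W"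
    then have "openin T {x \<in> topspace T. f x \<in> W}" using op by auto
    then have "eventually (\<lambda>y. y \<in> {x \<in> topspace T. f x \<in> W}) F"
      using le x W by (auto simp: le_nhdsin_iff)
    then show "eventually (\<lambda>y. f y \<in> W) F" by (rule eventually_mono) blast
  qed
  ultimately show "conv_of_top T' (filtermap f F) (f x)"
    unfolding conv_of_top_def using img x by auto
qed




lemma openin_quotient_top:
  "openin (quotient_top T q Y) U \<longleftrightarrow> U \<subseteq> Y \<and> openin T {x \<in> topspace T. q x \<in> U}"
proof -
  have "istopology (\<lambda>U. U \<subseteq> Y \<and> openin T {x \<in> topspace T. q x \<in> U})"
    unfolding istopology_def
  proof (rule conjI)
    show "\<forall>S1 S2. (S1 \<subseteq> Y \<and> openin T {x \<in> topspace T. q x \<in> S1}) \<longrightarrow> (S2 \<subseteq> Y \<and> openin T {x \<in> topspace T. q x \<in> S2})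
       \<longrightarrow> (S1 \<inter> S2 \<subseteq> Y \<and> openin T {x \<in> topspace T. q x \<in> S1 \<inter> S2})"
    proof (intro allI impI)
      fix S1 S2 assume a: "(S1 \<subseteq> Y \<and> openin T {x \<in> topspace T. q x \<in> S1})" "(S2 \<subseteq> Y \<and> openin T {x \<in> topspace T. q x \<in> S2})"
      have "{x \<in> topspace T. q x \<in> S1 \<inter> S2} = {x \<in> topspace T. q x \<in> S1} \<inter> {x \<in> topspace T. q x \<in> S2}" by auto
      then show "S1 \<inter> S2 \<subseteq> Y \<and> openin T {x \<in> topspace T. q x \<in> S1 \<inter> S2}" using a by auto
    qed
    show "\<forall>K. (\<forall>S\<in>K. S \<subseteq> Y \<and> openin T {x \<in> topspace T. q x \<in> S}) \<longrightarrow> (\<Union>K \<subseteq> Y \<and> openin T {x \<in> topspace T. q x \<in> \<Union>K})"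
    proof (intro allI impI)
      fix K assume a: "\<forall>S\<in>K. S \<subseteq> Y \<and> openin T {x \<in> topspace T. q x \<in> S}"
      have "{x \<in> topspace T. q x \<in> \<Union>K} = \<Union>((\<lambda>S. {x \<in> topspace T. q x \<in> S}) ` K)" by auto
      then show "\<Union>K \<subseteq> Y \<and> openin T {x \<in> topspace T. q x \<in> \<Union>K}" using a
        by (auto intro!: openin_Union)
    qed
  qed
  then show ?thesis unfolding quotient_top_def by simp
qed

lemma topspace_quotient_top:
  assumes "q ` topspace T \<subseteq> Y"
  shows "topspace (quotient_top T q Y) = Y"
proof -
  have "{x \<in> topspace T. q x \<in> Y} = topspace T" using assms by auto
  then have "openin (quotient_top T q Y) Y" unfolding openin_quotient_top by simp
  then have "Y \<subseteq> topspace (quotient_top T q Y)" by (rule openin_subset)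
  moreover have "topspace (quotient_top T q Y) \<subseteq> Y"
    using openin_topspace[of "quotient_top T q Y"] unfolding openin_quotient_top by auto
  ultimately show ?thesis by auto
qed

locale susp =
  fixes S :: "'a set" and b :: 'a
  assumes bS: "b \<in> S"
begin

abbreviation "X \<equiv> S \<times> {0..(1::real)}"
abbreviation "C \<equiv> susp_collapsed S b"
abbreviation "q \<equiv> susp_quot S b"
abbreviation "Y \<equiv> susp_space S b"

lemma C_sub: "C \<subseteq> X"
  using bS unfolding susp_collapsed_def by auto

lemma q_eq: "x \<in> X \<Longrightarrow> x' \<in> X \<Longrightarrow> q x = q x' \<longleftrightarrow> (x = x' \<or> (x \<in> C \<and> x' \<in> C))"
  unfolding susp_quot_def susp_rel_def by (auto simp: set_eq_iff) blast+

lemma q_in: "x \<in> X \<Longrightarrow> q x \<in> Y"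
  unfolding susp_quot_def susp_space_def by (rule quotientI)

lemma Y_cases: "y \<in> Y \<Longrightarrow> (\<And>x. x \<in> X \<Longrightarrow> y = q x \<Longrightarrow> P) \<Longrightarrow> P"
  unfolding susp_quot_def susp_space_def by (erule quotientE) auto

lemma self_in_q: "x \<in> X \<Longrightarrow> x \<in> q x"
  unfolding susp_quot_def susp_rel_def by auto

lemma mem_q: "x \<in> X \<Longrightarrow> x' \<in> q x \<Longrightarrow> x' \<in> X \<and> q x' = q x"
  using q_eq unfolding susp_quot_def susp_rel_def by auto

lemma saturated:
  assumes "V \<subseteq> X" "C \<subseteq> V \<or> C \<inter> V = {}"
  shows "{x \<in> X. q x \<in> q ` V} = V"
proof
  show "{x \<in> X. q x \<in> q ` V} \<subseteq> V"
  proof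
    fix x assume "x \<in> {x \<in> X. q x \<in> q ` V}"
    then obtain v where "x \<in> X" "v \<in> V" "q x = q v" by auto
    then show "x \<in> V" using q_eq[of x v] assms by auto
  qed
qed (use assms in auto)

end




lemma homeomorphic_Times2:
  assumes "S homeomorphic T" "S' homeomorphic T'"
  shows "(S \<times> S') homeomorphic (T \<times> T')"
proof -
  obtain f g where h: "homeomorphism S T f g" using assms(1) unfolding homeomorphic_def by auto
  obtain f' g' where h': "homeomorphism S' T' f' g'" using assms(2) unfolding homeomorphic_def by auto
  have c: "continuous_on S f" "continuous_on T g" "continuous_on S' f'" "continuous_on T' g'"
    using h h' unfolding homeomorphism_def by auto
  have "homeomorphism (S \<times> S') (T \<times> T') (\<lambda>p. (f (fst p), f' (snd p))) (\<lambda>p. (g (fst p), g' (snd p)))"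
    unfolding homeomorphism_def
  proof (intro conjI)
    show "continuous_on (S \<times> S') (\<lambda>p. (f (fst p), f' (snd p)))"
      by (intro continuous_on_Pair continuous_on_compose2[OF c(1) continuous_on_fst]
          continuous_on_compose2[OF c(3) continuous_on_snd]) auto
    show "continuous_on (T \<times> T') (\<lambda>p. (g (fst p), g' (snd p)))"
      by (intro continuous_on_Pair continuous_on_compose2[OF c(2) continuous_on_fst]
          continuous_on_compose2[OF c(4) continuous_on_snd]) auto
    show "(\<lambda>p. (f (fst p), f' (snd p))) ` (S \<times> S') = T \<times> T'"
      using h h' unfolding homeomorphism_def by (force simp: image_iff)
    show "(\<lambda>p. (g (fst p), g' (snd p))) ` (T \<times> T') = S \<times> S'"
      using h h' unfolding homeomorphism_def by (force simp: image_iff)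
  qed (use h h' in \<open>auto simp: homeomorphism_def\<close>)
  then show ?thesis unfolding homeomorphic_def by blast
qed

lemma punct_homeo:
  fixes b :: "'a::euclidean_space"
  assumes b: "b \<in> sphere 0 1"
  shows "((sphere 0 1 - {b}) \<times> {0<..<(1::real)}) homeomorphic (sphere (0::'a \<times> real) 1 - {(0,1)})"
proof -
  have b0: "b \<noteq> 0" using b by auto
  have h1: "(sphere 0 1 - {b}) homeomorphic {x::'a. b \<bullet> x = 0}"
    by (rule homeomorphic_punctured_sphere_hyperplane) (use b b0 in auto)
  have "{0<..<(1::real)} = ball (1/2) (1/2)" by (simp add: greaterThanLessThan_eq_ball)
  then have h2: "{0<..<(1::real)} homeomorphic (UNIV::real set)"
    using homeomorphic_ball_UNIV[of "1/2::real" "1/2"] by simp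
  have h3: "((sphere 0 1 - {b}) \<times> {0<..<(1::real)}) homeomorphic ({x::'a. b \<bullet> x = 0} \<times> (UNIV::real set))"
    by (rule homeomorphic_Times2[OF h1 h2])
  have e: "{x::'a. b \<bullet> x = 0} \<times> (UNIV::real set) = {p::'a\<times>real. (b,0) \<bullet> p = 0}"
    by (auto simp: inner_Pair_0)
  have h4: "(sphere (0::'a \<times> real) 1 - {(0,1)}) homeomorphic {p::'a\<times>real. (b,0) \<bullet> p = 0}"
    by (rule homeomorphic_punctured_sphere_hyperplane) (use b0 in \<open>auto simp: zero_prod_def dist_Pair_Pair\<close>)
  show ?thesis using h3 h4 unfolding e by (meson homeomorphic_sym homeomorphic_trans)
qed




locale ssusp =
  fixes b :: "'a::euclidean_space"
  assumes bsph: "b \<in> sphere 0 1"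
begin

sublocale susp "sphere (0::'a) 1" b by unfold_locales (rule bsph)

abbreviation "Sn \<equiv> sphere (0::'a \<times> real) 1"
abbreviation "N \<equiv> (0::'a, 1::real)"

lemma N_in: "N \<in> Sn" by (simp add: dist_Pair_Pair)

lemma XC_eq: "X - C = (sphere 0 1 - {b}) \<times> {0<..<(1::real)}"
  unfolding susp_collapsed_def by auto

lemma C_compact: "compact C"
proof -
  have "compact (sphere (0::'a) 1 \<times> {0::real, 1})"
    by (intro compact_Times compact_sphere finite_imp_compact) auto
  moreover have "compact ({b} \<times> {0..(1::real)})"
    by (intro compact_Times compact_sing compact_Icc)
  ultimately show ?thesis unfolding susp_collapsed_def by (rule compact_Un)
qed

lemma C_closed: "closed C" using C_compact by (rule compact_imp_closed)

lemma X_compact: "compact X"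
  by (intro compact_Times compact_sphere compact_Icc)

definition "phi = (SOME f. \<exists>g. homeomorphism (X - C) (Sn - {N}) f g)"
definition "psi = (SOME g. homeomorphism (X - C) (Sn - {N}) phi g)"

lemma hom: "homeomorphism (X - C) (Sn - {N}) phi psi"
proof -
  have "(X - C) homeomorphic (Sn - {N})" unfolding XC_eq by (rule punct_homeo[OF bsph])
  then have "\<exists>f g. homeomorphism (X - C) (Sn - {N}) f g" unfolding homeomorphic_def .
  then have "\<exists>g. homeomorphism (X - C) (Sn - {N}) phi g"
    unfolding phi_def by (rule someI_ex)
  then show ?thesis unfolding psi_def by (rule someI_ex)
qed

lemma hom_facts:
  "\<And>x. x \<in> X - C \<Longrightarrow> psi (phi x) = x" "phi ` (X - C) = Sn - {N}" "continuous_on (X - C) phi"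
  "\<And>y. y \<in> Sn - {N} \<Longrightarrow> phi (psi y) = y" "psi ` (Sn - {N}) = X - C" "continuous_on (Sn - {N}) psi"
  using hom unfolding homeomorphism_def by auto

definition "g p = (if p \<in> C then N else phi p)"

lemma g_img: "g ` X = Sn"
proof
  show "g ` X \<subseteq> Sn" using hom_facts(2) N_in unfolding g_def by auto
  show "Sn \<subseteq> g ` X"
  proof
    fix z assume z: "z \<in> Sn"
    show "z \<in> g ` X"
    proof (cases "z = N")
      case True
      have "(b, 0) \<in> C" unfolding susp_collapsed_def using bsph by auto
      then have "g (b, 0) = z" using True unfolding g_def by simp
      moreover have "(b, 0) \<in> X" using \<open>(b, 0) \<in> C\<close> C_sub by blast
      ultimately show ?thesis by (metis rev_image_eqI)
    next
      case False
      then have zz: "z \<in> Sn - {N}" using z by auto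
      then have "psi z \<in> psi ` (Sn - {N})" by (rule imageI)
      then have "psi z \<in> X - C" using hom_facts(5) by simp
      moreover have "phi (psi z) = z" using hom_facts(4) zz by auto
      moreover have "g (psi z) = phi (psi z)" using \<open>psi z \<in> X - C\<close> unfolding g_def by simp
      ultimately show ?thesis by (metis DiffD1 rev_image_eqI)
    qed
  qed
qed

lemma g_fib: "x \<in> X \<Longrightarrow> x' \<in> X \<Longrightarrow> g x = g x' \<longleftrightarrow> q x = q x'"
proof -
  assume x: "x \<in> X" and x': "x' \<in> X"
  have ne: "p \<in> X - C \<Longrightarrow> phi p \<noteq> N" for p using hom_facts(2) by auto
  have inj: "p \<in> X - C \<Longrightarrow> p' \<in> X - C \<Longrightarrow> phi p = phi p' \<Longrightarrow> p = p'" for p p'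
    using hom_facts(1) by metis
  show ?thesis unfolding q_eq[OF x x']
  proof (cases "x \<in> C"; cases "x' \<in> C")
    assume "x \<in> C" "x' \<in> C" then show "(g x = g x') = (x = x' \<or> x \<in> C \<and> x' \<in> C)" unfolding g_def by simp
  next
    assume a: "x \<in> C" "x' \<notin> C"
    then have "g x \<noteq> g x'" unfolding g_def using ne[of x'] x' by auto
    then show "(g x = g x') = (x = x' \<or> x \<in> C \<and> x' \<in> C)" using a by auto
  next
    assume a: "x \<notin> C" "x' \<in> C"
    then have "g x \<noteq> g x'" unfolding g_def using ne[of x] x by auto
    then show "(g x = g x') = (x = x' \<or> x \<in> C \<and> x' \<in> C)" using a by auto
  next
    assume a: "x \<notin> C" "x' \<notin> C"
    then have "g x = phi x" "g x' = phi x'" unfolding g_def by auto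
    then show "(g x = g x') = (x = x' \<or> x \<in> C \<and> x' \<in> C)" using a inj[of x x'] x x' by auto
  qed
qed

lemma g_cont: "continuous_on X g"
proof -
  have gX: "g \<in> X \<rightarrow> Sn" using g_img by auto
  have XCo: "openin (top_of_set X) (X - C)"
    using C_closed by (metis Diff_eq openin_open_Int open_Compl)
  show ?thesis unfolding continuous_on_open_gen[OF gX]
  proof (intro allI impI)
    fix U assume U: "openin (top_of_set Sn) U"
    show "openin (top_of_set X) (X \<inter> g -` U)"
    proof (cases "N \<in> U")
      case False
      have "U \<subseteq> Sn - {N}" using False openin_subset[OF U] by auto
      then have "openin (top_of_set (Sn - {N})) U" using U openin_subset_trans by blast
      then have "openin (top_of_set (X - C)) ((X - C) \<inter> phi -` U)"
        using continuous_openin_preimage[OF hom_facts(3) _] hom_facts(2) by blast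
      moreover have "X \<inter> g -` U = (X - C) \<inter> phi -` U"
      proof (intro set_eqI)
        fix x show "x \<in> X \<inter> g -` U \<longleftrightarrow> x \<in> (X - C) \<inter> phi -` U"
          using False by (cases "x \<in> C") (simp_all add: g_def)
      qed
      ultimately show ?thesis using openin_trans[OF _ XCo] by simp
    next
      case True
      obtain T where T: "open T" "U = Sn \<inter> T" using U by (auto simp: openin_open)
      have "Sn - U = Sn \<inter> - T" using T by auto
      then have K: "compact (Sn - U)" using T compact_sphere[of "0::'a\<times>real" 1]
        by (simp add: compact_Int_closed closed_Compl open_closed)
      have KS: "Sn - U \<subseteq> Sn - {N}" using True by auto
      have "compact (psi ` (Sn - U))"
        by (rule compact_continuous_image[OF continuous_on_subset[OF hom_facts(6) KS] K])
      then have cl: "closed (psi ` (Sn - U))" by (rule compact_imp_closed)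
      have "X \<inter> g -` U = X \<inter> - (psi ` (Sn - U))"
      proof (intro set_eqI iffI)
        fix x assume x: "x \<in> X \<inter> g -` U"
        show "x \<in> X \<inter> - (psi ` (Sn - U))"
        proof (cases "x \<in> C")
          case True then show ?thesis using x hom_facts(5) KS by blast
        next
          case False
          then have gx: "g x = phi x" unfolding g_def by simp
          show ?thesis
          proof (rule ccontr)
            assume "x \<notin> X \<inter> - psi ` (Sn - U)"
            then obtain z where "z \<in> Sn - U" "x = psi z" using x by auto
            then have "z \<in> Sn - {N}" using KS by blast
            then have "phi x = z" using hom_facts(4) \<open>x = psi z\<close> by blast
            then show False using x gx \<open>z \<in> Sn - U\<close> by auto
          qed
        qed
      next
        fix x assume x: "x \<in> X \<inter> - (psi ` (Sn - U))"
        show "x \<in> X \<inter> g -` U"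
        proof (cases "x \<in> C")
          case True then show ?thesis using x \<open>N \<in> U\<close> unfolding g_def by auto
        next
          case False
          then have xx: "x \<in> X - C" using x by auto
          have "phi x \<in> phi ` (X - C)" using xx by (rule imageI)
          then have "phi x \<in> Sn" using hom_facts(2) by simp
          moreover have "phi x \<notin> Sn - U"
          proof
            assume "phi x \<in> Sn - U"
            then have "psi (phi x) \<in> psi ` (Sn - U)" by auto
            then show False using hom_facts(1)[OF xx] x by auto
          qed
          ultimately show ?thesis using x False unfolding g_def by auto
        qed
      qed
      moreover have "open (- (psi ` (Sn - U)))" using cl by (simp add: open_Compl)
      ultimately show ?thesis by (simp add: openin_open_Int)
    qed
  qed
qed

end



context ssusp
begin

abbreviation "XT \<equiv> prod_topology (top_of_set (sphere (0::'a) 1)) (top_of_set {0..(1::real)})"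
abbreviation "QT \<equiv> quotient_top XT q Y"
abbreviation "cc \<equiv> prod_conv (sphere (0::'a) 1) (conv_of_top (top_of_set (sphere (0::'a) 1)))
                         {0..1} (conv_of_top (top_of_set {0..(1::real)}))"

lemma XT_eq: "XT = top_of_set X" by simp

lemma QT_open: "openin QT U \<longleftrightarrow> U \<subseteq> Y \<and> openin (top_of_set X) {x \<in> X. q x \<in> U}"
  unfolding openin_quotient_top XT_eq by simp

lemma QT_top: "topspace QT = Y"
  by (rule topspace_quotient_top) (auto simp: XT_eq intro: q_in)

lemma q_open_sat:
  assumes "openin (top_of_set X) V" "C \<subseteq> V \<or> C \<inter> V = {}"
  shows "openin QT (q ` V)"
proof -
  have VX: "V \<subseteq> X" using openin_subset[OF assms(1)] by simp
  have "q ` V \<subseteq> Y" using VX q_in by auto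
  moreover have "{x \<in> X. q x \<in> q ` V} = V" by (rule saturated[OF VX assms(2)])
  ultimately show ?thesis unfolding QT_open using assms(1) by simp
qed

lemma ev_nhdsX:
  assumes "p \<in> X"
  shows "eventually P (nhdsin XT p) \<longleftrightarrow> (\<exists>V. openin (top_of_set X) V \<and> p \<in> V \<and> (\<forall>x\<in>V. P x))"
  unfolding XT_eq eventually_nhdsin using assms by simp

lemma nhdsX_filter:
  assumes "p \<in> X"
  shows "filter_on X (nhdsin XT p)"
  unfolding filter_on_def
proof
  show "nhdsin XT p \<noteq> bot"
  proof
    assume "nhdsin XT p = bot"
    then have "eventually (\<lambda>_. False) (nhdsin XT p)" by simp
    then obtain V where "p \<in> V" "\<forall>x\<in>V. False" unfolding ev_nhdsX[OF assms] by blast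
    then show False by blast
  qed
  show "eventually (\<lambda>x. x \<in> X) (nhdsin XT p)"
    unfolding ev_nhdsX[OF assms] using assms by (intro exI[of _ X]) auto
qed

lemma cc_nhds:
  assumes p: "p \<in> X"
  shows "cc (nhdsin XT p) p"
proof -
  let ?N = "nhdsin XT p"
  have F: "filter_on X ?N" by (rule nhdsX_filter[OF p])
  then have Nb: "?N \<noteq> bot" and NX: "eventually (\<lambda>x. x \<in> X) ?N" unfolding filter_on_def by auto
  have c1: "conv_of_top (top_of_set (sphere 0 1)) (filtermap fst ?N) (fst p)"
    unfolding conv_of_top_def filter_on_def
  proof (intro conjI)
    show "fst p \<in> topspace (top_of_set (sphere (0::'a) 1))" using p by auto
    show "filtermap fst ?N \<noteq> bot" using Nb by (simp add: filtermap_bot_iff)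
    show "eventually (\<lambda>x. x \<in> topspace (top_of_set (sphere (0::'a) 1))) (filtermap fst ?N)"
      unfolding eventually_filtermap by (rule eventually_mono[OF NX]) auto
    show "filtermap fst ?N \<le> nhdsin (top_of_set (sphere 0 1)) (fst p)"
      unfolding le_nhdsin_iff[of "fst p", OF \<open>fst p \<in> topspace (top_of_set (sphere (0::'a) 1))\<close>]
    proof (intro allI impI)
      fix W assume W: "openin (top_of_set (sphere 0 1)) W \<and> fst p \<in> W"
      have "openin (top_of_set X) (W \<times> {0..1})"
        using W by (intro openin_Times) auto
      moreover have "p \<in> W \<times> {0..1}" using W p by (cases p) auto
      ultimately have "eventually (\<lambda>x. x \<in> W \<times> {0..1}) ?N"
        unfolding ev_nhdsX[OF p] by blast
      then show "eventually (\<lambda>y. y \<in> W) (filtermap fst ?N)"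
        unfolding eventually_filtermap by (rule eventually_mono) auto
    qed
  qed
  have c2: "conv_of_top (top_of_set {0..1}) (filtermap snd ?N) (snd p)"
    unfolding conv_of_top_def filter_on_def
  proof (intro conjI)
    show "snd p \<in> topspace (top_of_set {0..(1::real)})" using p by auto
    show "filtermap snd ?N \<noteq> bot" using Nb by (simp add: filtermap_bot_iff)
    show "eventually (\<lambda>x. x \<in> topspace (top_of_set {0..(1::real)})) (filtermap snd ?N)"
      unfolding eventually_filtermap by (rule eventually_mono[OF NX]) auto
    show "filtermap snd ?N \<le> nhdsin (top_of_set {0..1}) (snd p)"
      unfolding le_nhdsin_iff[of "snd p", OF \<open>snd p \<in> topspace (top_of_set {0..(1::real)})\<close>]
    proof (intro allI impI)
      fix W assume W: "openin (top_of_set {0..1}) W \<and> snd p \<in> W"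
      have "openin (top_of_set X) (sphere 0 1 \<times> W)"
        using W by (intro openin_Times) auto
      moreover have "p \<in> sphere 0 1 \<times> W" using W p by (cases p) auto
      ultimately have "eventually (\<lambda>x. x \<in> sphere 0 1 \<times> W) ?N"
        unfolding ev_nhdsX[OF p] by blast
      then show "eventually (\<lambda>y. y \<in> W) (filtermap snd ?N)"
        unfolding eventually_filtermap by (rule eventually_mono) auto
    qed
  qed
  show ?thesis unfolding prod_conv_def by (intro conjI p F c1 c2)
qed

lemma cc_cont:
  assumes c: "cc F p"
  shows "conv_of_top QT (filtermap q F) (q p)"
proof -
  have p: "p \<in> X" and F: "filter_on X F"
    and c1: "filtermap fst F \<le> nhdsin (top_of_set (sphere 0 1)) (fst p)"
    and c2: "filtermap snd F \<le> nhdsin (top_of_set {0..1}) (snd p)"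
    using c unfolding prod_conv_def conv_of_top_def by auto
  have qp: "q p \<in> topspace QT" using q_in[OF p] QT_top by simp
  have Fb: "F \<noteq> bot" and FX: "eventually (\<lambda>x. x \<in> X) F" using F unfolding filter_on_def by auto
  have "filter_on (topspace QT) (filtermap q F)"
    unfolding filter_on_def QT_top
  proof
    show "filtermap q F \<noteq> bot" using Fb by (simp add: filtermap_bot_iff)
    show "eventually (\<lambda>y. y \<in> Y) (filtermap q F)" unfolding eventually_filtermap
      by (rule eventually_mono[OF FX]) (rule q_in)
  qed
  moreover have "filtermap q F \<le> nhdsin QT (q p)"
    unfolding le_nhdsin_iff[OF qp]
  proof (intro allI impI)
    fix U assume U: "openin QT U \<and> q p \<in> U"
    then have "openin (top_of_set X) {x \<in> X. q x \<in> U}" unfolding QT_open by auto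
    then obtain T where T: "open T" "{x \<in> X. q x \<in> U} = X \<inter> T" by (auto simp: openin_open)
    have "p \<in> T" using T(2) U p by auto
    then obtain A B where AB: "open A" "open B" "p \<in> A \<times> B" "A \<times> B \<subseteq> T"
      using open_prod_elim[OF T(1)] by blast
    have fp: "fst p \<in> topspace (top_of_set (sphere (0::'a) 1))" using p by (cases p) auto
    have sp: "snd p \<in> topspace (top_of_set {0..(1::real)})" using p by (cases p) auto
    have c1': "\<forall>W. openin (top_of_set (sphere 0 1)) W \<and> fst p \<in> W \<longrightarrow> eventually (\<lambda>y. y \<in> W) (filtermap fst F)"
      using c1 le_nhdsin_iff[OF fp] by blast
    have c2': "\<forall>W. openin (top_of_set {0..1}) W \<and> snd p \<in> W \<longrightarrow> eventually (\<lambda>y. y \<in> W) (filtermap snd F)"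
      using c2 le_nhdsin_iff[OF sp] by blast
    have "openin (top_of_set (sphere 0 1)) (sphere 0 1 \<inter> A)" using AB by auto
    moreover have "fst p \<in> sphere 0 1 \<inter> A" using AB p by (cases p) auto
    ultimately have "eventually (\<lambda>y. y \<in> sphere 0 1 \<inter> A) (filtermap fst F)" using c1' by blast
    then have e1: "eventually (\<lambda>x. fst x \<in> A) F"
      unfolding eventually_filtermap by (rule eventually_mono) auto
    have "openin (top_of_set {0..1}) ({0..(1::real)} \<inter> B)" using AB by auto
    moreover have "snd p \<in> {0..1} \<inter> B" using AB p by (cases p) auto
    ultimately have "eventually (\<lambda>y. y \<in> {0..1} \<inter> B) (filtermap snd F)" using c2' by blast
    then have e2: "eventually (\<lambda>x. snd x \<in> B) F"
      unfolding eventually_filtermap by (rule eventually_mono) auto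
    have "eventually (\<lambda>x. x \<in> X \<and> fst x \<in> A \<and> snd x \<in> B) F"
      using FX e1 e2 by (intro eventually_conj)
    then show "eventually (\<lambda>y. y \<in> U) (filtermap q F)"
      unfolding eventually_filtermap
    proof (rule eventually_mono)
      fix x assume "x \<in> X \<and> fst x \<in> A \<and> snd x \<in> B"
      then have "x \<in> X \<inter> T" using AB by (cases x) auto
      then show "q x \<in> U" using T(2) by blast
    qed
  qed
  ultimately show ?thesis unfolding conv_of_top_def using qp by simp
qed

end



context ssusp
begin

lemma XCo: "openin (top_of_set X) (X - C)"
  using C_closed by (metis Diff_eq openin_open_Int open_Compl)

lemma ultra_lift:
  assumes U: "ultrafilter_on Y U" and y: "y \<in> Y" and le: "U \<le> nhdsin QT y"
  shows "\<exists>p\<in>X. q p = y \<and> U \<le> filtermap q (nhdsin XT p)"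
proof -
  obtain p0 where p0: "p0 \<in> X" "y = q p0" using Y_cases[OF y] by blast
  have yQ: "y \<in> topspace QT" using y QT_top by simp
  have evU: "eventually (\<lambda>z. z \<in> O') U" if "openin QT O'" "y \<in> O'" for O'
    using le le_nhdsin_iff[OF yQ] that by blast
  have Ub: "U \<noteq> bot" using U unfolding ultrafilter_on_def filter_on_def by auto
  show ?thesis
  proof (cases "p0 \<in> C")
    case False
    have "U \<le> filtermap q (nhdsin XT p0)"
      unfolding le_filter_def eventually_filtermap
    proof (intro allI impI)
      fix P assume "eventually (\<lambda>x. P (q x)) (nhdsin XT p0)"
      then obtain V where V: "openin (top_of_set X) V" "p0 \<in> V" "\<forall>x\<in>V. P (q x)"
        unfolding ev_nhdsX[OF p0(1)] by blast
      have V': "openin (top_of_set X) (V - C)"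
        by (rule openin_diff[OF V(1) closed_subset[OF C_sub C_closed]])
      have "openin QT (q ` (V - C))" by (rule q_open_sat[OF V']) auto
      moreover have "y \<in> q ` (V - C)" using p0 V False by auto
      ultimately have "eventually (\<lambda>z. z \<in> q ` (V - C)) U" by (rule evU)
      then show "eventually P U" by (rule eventually_mono) (use V(3) in auto)
    qed
    then show ?thesis using p0 by blast
  next
    case True
    show ?thesis
    proof (rule ccontr)
      assume nex: "\<not> ?thesis"
      have "\<forall>p\<in>C. \<exists>T. open T \<and> p \<in> T \<and> eventually (\<lambda>z. z \<notin> q ` (X \<inter> T)) U"
      proof
        fix p assume pC: "p \<in> C"
        then have pX: "p \<in> X" using C_sub by auto
        have "q p = y" using p0 True pC q_eq[OF pX p0(1)] by auto
        then have "\<not> U \<le> filtermap q (nhdsin XT p)" using nex pX by blast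
        then obtain P where P1: "eventually (\<lambda>x. P (q x)) (nhdsin XT p)" and P2: "\<not> eventually P U"
          unfolding le_filter_def eventually_filtermap by blast
        obtain V where V: "openin (top_of_set X) V" "p \<in> V" "\<forall>x\<in>V. P (q x)"
          using P1 unfolding ev_nhdsX[OF pX] by blast
        obtain T where T: "open T" "V = X \<inter> T" using V(1) by (auto simp: openin_open)
        have "eventually (\<lambda>z. z \<in> {z. P z}) U \<or> eventually (\<lambda>z. z \<in> Y \<and> z \<notin> {z. P z}) U"
          by (rule ultra_cases[OF U])
        then have "eventually (\<lambda>z. z \<in> Y \<and> z \<notin> {z. P z}) U" using P2 by simp
        then have "eventually (\<lambda>z. z \<notin> q ` (X \<inter> T)) U"
          by (rule eventually_mono) (use V(3) T(2) in auto)
        then show "\<exists>T. open T \<and> p \<in> T \<and> eventually (\<lambda>z. z \<notin> q ` (X \<inter> T)) U"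
          using T V(2) by blast
      qed
      then obtain Tf where Tf: "\<forall>p\<in>C. open (Tf p) \<and> p \<in> Tf p \<and> eventually (\<lambda>z. z \<notin> q ` (X \<inter> Tf p)) U"
        by metis
      have cov: "C \<subseteq> (\<Union>p\<in>C. Tf p)" using Tf by blast
      obtain K where K: "K \<subseteq> C" "finite K" "C \<subseteq> (\<Union>p\<in>K. Tf p)"
        using compactE_image[OF C_compact _ cov] Tf by metis
      define W where "W = X \<inter> (\<Union>p\<in>K. Tf p)"
      have "open (\<Union>p\<in>K. Tf p)" using Tf K(1) by (intro open_UN) blast
      then have Wo: "openin (top_of_set X) W" unfolding W_def by (rule openin_open_Int)
      have CW: "C \<subseteq> W" using K C_sub unfolding W_def by auto
      have "openin QT (q ` W)" by (rule q_open_sat[OF Wo]) (use CW in auto)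
      moreover have "y \<in> q ` W" using p0 True CW by auto
      ultimately have e1: "eventually (\<lambda>z. z \<in> q ` W) U" by (rule evU)
      have e2: "eventually (\<lambda>z. \<forall>p\<in>K. z \<notin> q ` (X \<inter> Tf p)) U"
        using K(2) by (rule eventually_ball_finite) (use Tf K(1) in blast)
      have "eventually (\<lambda>z. False) U" using e1 e2 by (rule ev2) (auto simp: W_def)
      then show False using Ub by (simp add: trivial_limit_def)
    qed
  qed
qed

lemma part1: "quotient_conv X cc q Y = conv_of_top QT"
proof (intro ext iffI)
  fix G y
  assume a: "quotient_conv X cc q Y G y"
  have ps: "pstop Y (conv_of_top QT)" using pstop_conv_of_top[of QT] QT_top by simp
  have cont: "conv_continuous X cc Y (conv_of_top QT) q"
    unfolding conv_continuous_def using q_in cc_cont by blast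
  show "conv_of_top QT G y" using a ps cont unfolding quotient_conv_def by blast
next
  fix G y assume a: "conv_of_top QT G y"
  then have y: "y \<in> Y" and G: "filter_on Y G" and le: "G \<le> nhdsin QT y"
    unfolding conv_of_top_def QT_top by auto
  show "quotient_conv X cc q Y G y"
    unfolding quotient_conv_def
  proof (intro conjI allI impI G y)
    fix d assume d: "pstop Y d \<and> conv_continuous X cc Y d q"
    have mono: "\<And>F G x. d F x \<Longrightarrow> filter_on Y G \<Longrightarrow> G \<le> F \<Longrightarrow> d G x"
      using d unfolding pstop_def conv_space_def by blast
    have ucrit: "d G y \<longleftrightarrow> (\<forall>U. ultrafilter_on Y U \<and> U \<le> G \<longrightarrow> d U y)"
      using d G y unfolding pstop_def by blast
    have dc: "\<And>F p. cc F p \<Longrightarrow> d (filtermap q F) (q p)"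
      using d unfolding conv_continuous_def by blast
    show "d G y" unfolding ucrit
    proof (intro allI impI)
      fix U assume U: "ultrafilter_on Y U \<and> U \<le> G"
      then have "U \<le> nhdsin QT y" using le by (meson order_trans)
      then obtain p where p: "p \<in> X" "q p = y" "U \<le> filtermap q (nhdsin XT p)"
        using ultra_lift U y by blast
      have "d (filtermap q (nhdsin XT p)) y" using dc[OF cc_nhds[OF p(1)]] p(2) by simp
      moreover have "filter_on Y U" using U unfolding ultrafilter_on_def by auto
      ultimately show "d U y" using mono p(3) by blast
    qed
  qed
qed

definition "Fm y = g (SOME x. x \<in> y)"
definition "Gm z = q (SOME x. x \<in> X \<and> g x = z)"

lemma Fm_q: "x \<in> X \<Longrightarrow> Fm (q x) = g x"
proof -
  assume x: "x \<in> X"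
  have "\<exists>x'. x' \<in> q x" using self_in_q[OF x] by (rule exI)
  then have "(SOME x'. x' \<in> q x) \<in> q x" by (rule someI_ex)
  then have "(SOME x'. x' \<in> q x) \<in> X \<and> q (SOME x'. x' \<in> q x) = q x" by (rule mem_q[OF x])
  then have "g (SOME x'. x' \<in> q x) = g x" using g_fib[of "SOME x'. x' \<in> q x" x] x by simp
  then show ?thesis unfolding Fm_def .
qed

lemma Gm_wit: "z \<in> Sn \<Longrightarrow> \<exists>x. x \<in> X \<and> g x = z \<and> Gm z = q x"
proof -
  assume z: "z \<in> Sn"
  then have "z \<in> g ` X" using g_img by simp
  then obtain x0 where "x0 \<in> X" "z = g x0" by (rule imageE)
  then have "\<exists>x. x \<in> X \<and> g x = z" by blast
  then have "(SOME x. x \<in> X \<and> g x = z) \<in> X \<and> g (SOME x. x \<in> X \<and> g x = z) = z" by (rule someI_ex)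
  then show ?thesis unfolding Gm_def by (intro exI[of _ "SOME x. x \<in> X \<and> g x = z"]) simp
qed

lemma Fm_img: "y \<in> Y \<Longrightarrow> Fm y \<in> Sn"
proof (erule Y_cases)
  fix x assume x: "x \<in> X" and y: "y = q x"
  have "g x \<in> g ` X" using x by (rule imageI)
  then show "Fm y \<in> Sn" unfolding y Fm_q[OF x] g_img .
qed

lemma Gm_img: "z \<in> Sn \<Longrightarrow> Gm z \<in> Y"
proof -
  assume "z \<in> Sn"
  then obtain x where "x \<in> X" "Gm z = q x" using Gm_wit by blast
  then show ?thesis using q_in by simp
qed

lemma GF: "y \<in> Y \<Longrightarrow> Gm (Fm y) = y"
proof (erule Y_cases)
  fix x assume x: "x \<in> X" and y: "y = q x"
  have "g x \<in> Sn" using g_img x by auto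
  then obtain x' where x': "x' \<in> X" "g x' = g x" "Gm (g x) = q x'" using Gm_wit by blast
  then show "Gm (Fm y) = y" using y Fm_q[OF x] g_fib[OF x' (1) x] by simp
qed

lemma FG: "z \<in> Sn \<Longrightarrow> Fm (Gm z) = z"
proof -
  assume "z \<in> Sn"
  then obtain x where "x \<in> X" "g x = z" "Gm z = q x" using Gm_wit by blast
  then show ?thesis using Fm_q by simp
qed

lemma Fm_open:
  assumes W: "openin (top_of_set Sn) W"
  shows "openin QT {y \<in> Y. Fm y \<in> W}"
proof -
  have "{x \<in> X. q x \<in> {y \<in> Y. Fm y \<in> W}} = X \<inter> g -` W"
    using Fm_q q_in by auto
  moreover have "openin (top_of_set X) (X \<inter> g -` W)"
    by (rule continuous_openin_preimage[OF g_cont _ W]) (use g_img in auto)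
  ultimately show ?thesis unfolding QT_open by auto
qed

lemma Gm_open:
  assumes U: "openin QT U"
  shows "openin (top_of_set Sn) {z \<in> Sn. Gm z \<in> U}"
proof -
  have "openin (top_of_set X) {x \<in> X. q x \<in> U}" using U unfolding QT_open by auto
  then obtain T where T: "open T" "{x \<in> X. q x \<in> U} = X \<inter> T" by (auto simp: openin_open)
  have "compact (X \<inter> - T)" using X_compact T(1) by (intro compact_Int_closed) (auto simp: closed_Compl)
  then have "compact (g ` (X \<inter> - T))"
    by (rule compact_continuous_image[OF continuous_on_subset[OF g_cont], rotated]) auto
  then have cl: "closed (g ` (X \<inter> - T))" by (rule compact_imp_closed)
  have "{z \<in> Sn. Gm z \<in> U} = Sn \<inter> - (g ` (X \<inter> - T))"
  proof (intro set_eqI iffI)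
    fix z assume z: "z \<in> {z \<in> Sn. Gm z \<in> U}"
    then obtain x where x: "x \<in> X" "g x = z" "Gm z = q x" using Gm_wit by blast
    show "z \<in> Sn \<inter> - (g ` (X \<inter> - T))"
    proof (rule ccontr)
      assume "z \<notin> Sn \<inter> - g ` (X \<inter> - T)"
      then obtain x' where x': "x' \<in> X" "x' \<notin> T" "g x' = z" using z by auto
      then have "q x' = q x" using g_fib[OF x'(1) x(1)] x by simp
      then have "q x' \<in> U" using z x by simp
      then have "x' \<in> T" using T(2) x'(1) by blast
      then show False using x' by simp
    qed
  next
    fix z assume z: "z \<in> Sn \<inter> - (g ` (X \<inter> - T))"
    then obtain x where x: "x \<in> X" "g x = z" "Gm z = q x" using Gm_wit by blast
    then have "x \<in> T" using z by auto
    then have "q x \<in> U" using T(2) x(1) by blast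
    then show "z \<in> {z \<in> Sn. Gm z \<in> U}" using z x by simp
  qed
  moreover have "open (- (g ` (X \<inter> - T)))" using cl by (simp add: open_Compl)
  ultimately show ?thesis by (simp add: openin_open_Int)
qed

lemma part2: "conv_homeomorphic Y (conv_of_top QT) Sn (conv_of_top (top_of_set Sn))"
proof -
  have c1: "conv_continuous (topspace QT) (conv_of_top QT) (topspace (top_of_set Sn)) (conv_of_top (top_of_set Sn)) Fm"
    by (rule conv_cont_of_top) (use Fm_img Fm_open QT_top in auto)
  have c2: "conv_continuous (topspace (top_of_set Sn)) (conv_of_top (top_of_set Sn)) (topspace QT) (conv_of_top QT) Gm"
    by (rule conv_cont_of_top) (use Gm_img Gm_open QT_top in auto)
  have c1': "conv_continuous Y (conv_of_top QT) Sn (conv_of_top (top_of_set Sn)) Fm"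
    using c1 unfolding QT_top by simp
  have c2': "conv_continuous Sn (conv_of_top (top_of_set Sn)) Y (conv_of_top QT) Gm"
    using c2 unfolding QT_top by simp
  show ?thesis unfolding conv_homeomorphic_def
    by (intro exI[of _ Fm] exI[of _ Gm] conjI c1' c2' ballI GF FG)
qed

end

theorem mainTheorem6:
  fixes b :: "'a :: euclidean_space"
  assumes "b \<in> sphere 0 1"
  defines "S \<equiv> sphere (0::'a) 1"
  defines "X \<equiv> S \<times> {0..(1::real)}"
  defines "c \<equiv> prod_conv S (conv_of_top (top_of_set S))
                         {0..1} (conv_of_top (top_of_set {0..(1::real)}))"
  shows "quotient_conv X c (susp_quot S b) (susp_space S b)
           = conv_of_top (quotient_top (prod_topology (top_of_set S) (top_of_set {0..1}))
                                       (susp_quot S b) (susp_space S b))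
       \<and> conv_homeomorphic (susp_space S b) (quotient_conv X c (susp_quot S b) (susp_space S b))
            (sphere (0::'a \<times> real) 1) (conv_of_top (top_of_set (sphere (0::'a \<times> real) 1)))"
proof -
  interpret ssusp b by unfold_locales (rule assms(1))
  show ?thesis unfolding X_def c_def S_def part1
    by (intro conjI refl part2)
qed

end
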